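(* Let $n\ge1$, $x_1\ge\dots\ge x_n>0$, fix $q>0$, and let $C=\{\pi_h,\pi_{h+1},\dots,\pi_{h+r}\}$ be a connected component of the multi-graph $\mathcal{MG}^x(q)$ constructed in the context (equivalently, the set of vertices carried by one excursion of $B^{x,q}$ above $0$, namely the excursion on the interval $[\xi^q_{(h)},\xi^q_{(h)}+x_{\pi_h}+\dots+x_{\pi_{h+r}}]$). Then the cumulative rate of surplus edges in $C$ up to time $q$, i.e. $\sum (q-T_{l;j-k})\,r_{l;j-k}$ over all triples $(l;j,k)$ with $l\in\{h,\dots,h+r\}$, $j\le k\le l$, ($k=l\Rightarrow j=l$), and $T_{l;j-k}\le q$, equals $q\int_{\xi^q_{(h)}}^{\xi^q_{(h)}+x_{\pi_h}+\dots+x_{\pi_{h+r}}}B^{x,q}(s)\,ds$, i.e. $q$ times the area under that excursion of $B^{x,q}$.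
   Context: Vertex $i\in[n]$ has mass $x_i$. Let $\xi_1,\dots,\xi_n$ be independent, $\xi_i$ exponential of rate $x_i$, order statistics $\xi_{(1)}<\dots<\xi_{(n)}$, permutation $\pi$ with $\xi_{\pi_i}=\xi_{(i)}$, $\xi^q_{(i)}=\xi_{(i)}/q$. Breadth-first walk $Z^{x,q}(s)=\sum_{i=1}^n x_i\mathbf 1(\xi_i/q\le s)-s$ and its reflection $B^{x,q}(s)=Z^{x,q}(s)-\inf_{u\le s}Z^{x,q}(u)$, $s\ge0$. Forest $\mathcal F_0(q)$: intervals $I^q_i=(a_i,b_i]$ with $I^q_1=(\xi^q_{(1)},\xi^q_{(1)}+x_{\pi_1}]$; for $i\ge2$, if $\xi^q_{(i)}\le b_{i-1}$ ($\pi_i$ non-root) then $I^q_i=(a_{i-1},b_{i-1}+x_{\pi_i}]$, else ($\pi_i$ root) $I^q_i=(\xi^q_{(i)},\xi^q_{(i)}+x_{\pi_i}]$; non-root $\pi_r$ gets edge $\pi_r\to\pi_i$ for the unique $i<r$ with $\xi^q_{(r)}\in I^q_i\setminus I^q_{i-1}$ ($I^q_0=\emptyset$). Components are blocks $\{\pi_i,\dots,\pi_m\}$ (a root followed by non-roots), matching the excursions of $B^{x,q}$ above $0$. Forest $\mathcal F_1$: no edges at time $0$; whenever trees $\{\pi_i,\dots,\pi_{j-1}\}$ and $\{\pi_j,\dots,\pi_{j+k}\}$ of $\mathcal F_0$ merge at time $q$, add an edge $L_1\to L_2$ with $L_1$, $L_2$ independent, $L_1$ chosen from the right block and $L_2$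 from the left block, each with probability proportional to mass. Surplus multi-edges: for $j\le k<l$, $T_{l;j-k}$ is the (possibly infinite) time at which the component of $\mathcal F_0$ containing $\pi_l$ merges with a component consisting of exactly $\{\pi_j,\dots,\pi_k\}$; $\zeta^{l;j-k}$ is (conditionally on $\xi$, independently) a Poisson process of rate $r_{l;j-k}=x_{\pi_l}(x_{\pi_j}+\dots+x_{\pi_k})$ whose arrivals after $T_{l;j-k}$ each create a new multi-edge $\pi_l\to\pi_I$ with $I\in\{j,\dots,k\}$ independent and $P(I=i)\propto x_{\pi_i}$. For each $l$, $T_{l;l-l}=0$ and $\zeta^{l;l-l}$ is a Poisson process of rate $r_{l;l-l}=x_{\pi_l}^2/2$, each arrival creating a self-loop $\pi_l\to\pi_l$. $\mathcal{MG}^x(q)$ is the multi-graph on $[n]$ consisting of the edges of $\mathcal F_1(q)$ together with all multi-edges and self-loops created up to time $q$. The cumulative rate of $\zeta^{l;j-k}$ up to time $q$ is $(q-T_{l;j-k})r_{l;j-k}$ on $\{T_{l;j-k}\le q\}$. *)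

theory Defs
  imports "HOL-Analysis.Analysis" "HOL-Library.Extended_Real"
begin

(* Vertices are 1..n, masses x v, exponential clocks xi v.
   \<pi> i is the vertex with the i-th smallest clock (i = 1..n).
   t > 0 is the time parameter (q in the paper); xi^t_(i) = xi (\<pi> i) / t. *)

(* right endpoint b_i of the interval I^t_i of the forest F_0(t) *)
fun bnd :: "(nat \<Rightarrow> real) \<Rightarrow> (nat \<Rightarrow> real) \<Rightarrow> (nat \<Rightarrow> nat) \<Rightarrow> real \<Rightarrow> nat \<Rightarrow> real" where
  "bnd x xi \<pi> t 0 = 0"
| "bnd x xi \<pi> t (Suc 0) = xi (\<pi> 1) / t + x (\<pi> 1)"
| "bnd x xi \<pi> t (Suc (Suc i)) =
     (if xi (\<pi> (i+2)) / t \<le> bnd x xi \<pi> t (Suc i)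
      then bnd x xi \<pi> t (Suc i) + x (\<pi> (i+2))
      else xi (\<pi> (i+2)) / t + x (\<pi> (i+2)))"

definition is_root :: "(nat \<Rightarrow> real) \<Rightarrow> (nat \<Rightarrow> real) \<Rightarrow> (nat \<Rightarrow> nat) \<Rightarrow> real \<Rightarrow> nat \<Rightarrow> bool" where
  "is_root x xi \<pi> t i \<longleftrightarrow> i = 1 \<or> (2 \<le> i \<and> xi (\<pi> i) / t > bnd x xi \<pi> t (i - 1))"

(* indices (positions in the order \<pi>) of the component of F_0(t) containing pi_i:
   a root followed by the subsequent non-roots *)
definition comp :: "nat \<Rightarrow> (nat \<Rightarrow> real) \<Rightarrow> (nat \<Rightarrow> real) \<Rightarrow> (nat \<Rightarrow> nat) \<Rightarrow> real \<Rightarrow> nat \<Rightarrow> nat set" where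
  "comp n x xi \<pi> t i = {j \<in> {1..n}. \<forall>m. min i j < m \<and> m \<le> max i j \<longrightarrow> \<not> is_root x xi \<pi> t m}"

(* the component of F_0 containing pi_l merges at time t with a component
   consisting of exactly {pi_j,...,pi_k} (j \<le> k < l) *)
definition merges_at :: "nat \<Rightarrow> (nat \<Rightarrow> real) \<Rightarrow> (nat \<Rightarrow> real) \<Rightarrow> (nat \<Rightarrow> nat) \<Rightarrow> nat \<Rightarrow> nat \<Rightarrow> nat \<Rightarrow> real \<Rightarrow> bool" where
  "merges_at n x xi \<pi> l j k t \<longleftrightarrow> 0 < t \<and> {j..k} \<subseteq> comp n x xi \<pi> t l \<and>
     (\<exists>\<epsilon>>0. \<forall>t'. 0 < t' \<and> t - \<epsilon> < t' \<and> t' < t \<longrightarrow>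
        comp n x xi \<pi> t' j = {j..k} \<and> comp n x xi \<pi> t' l \<inter> {j..k} = {})"

definition T_merge :: "nat \<Rightarrow> (nat \<Rightarrow> real) \<Rightarrow> (nat \<Rightarrow> real) \<Rightarrow> (nat \<Rightarrow> nat) \<Rightarrow> nat \<Rightarrow> nat \<Rightarrow> nat \<Rightarrow> ereal" where
  "T_merge n x xi \<pi> l j k =
     (if j = l \<and> k = l then 0 else Inf (ereal ` {t. merges_at n x xi \<pi> l j k t}))"

definition rate :: "(nat \<Rightarrow> real) \<Rightarrow> (nat \<Rightarrow> nat) \<Rightarrow> nat \<Rightarrow> nat \<Rightarrow> nat \<Rightarrow> real" where
  "rate x \<pi> l j k =
     (if j = l \<and> k = l then x (\<pi> l) ^ 2 / 2 else x (\<pi> l) * (\<Sum>i=j..k. x (\<pi> i)))"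

definition cum_rate :: "nat \<Rightarrow> (nat \<Rightarrow> real) \<Rightarrow> (nat \<Rightarrow> real) \<Rightarrow> (nat \<Rightarrow> nat) \<Rightarrow> real \<Rightarrow> nat \<Rightarrow> nat \<Rightarrow> real" where
  "cum_rate n x xi \<pi> q h r =
     (\<Sum>(l,j,k) \<in> {(l,j,k). l \<in> {h..h+r} \<and> 1 \<le> j \<and> j \<le> k \<and> k \<le> l \<and> (k = l \<longrightarrow> j = l)
                         \<and> T_merge n x xi \<pi> l j k \<le> ereal q}.
        (q - real_of_ereal (T_merge n x xi \<pi> l j k)) * rate x \<pi> l j k)"

definition Zw :: "nat \<Rightarrow> (nat \<Rightarrow> real) \<Rightarrow> (nat \<Rightarrow> real) \<Rightarrow> real \<Rightarrow> real \<Rightarrow> real" where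
  "Zw n x xi q s = (\<Sum>i=1..n. x i * (if xi i / q \<le> s then 1 else 0)) - s"

definition Bw :: "nat \<Rightarrow> (nat \<Rightarrow> real) \<Rightarrow> (nat \<Rightarrow> real) \<Rightarrow> real \<Rightarrow> real \<Rightarrow> real" where
  "Bw n x xi q s = Zw n x xi q s - Inf (Zw n x xi q ` {0..s})"

end

theory Submission
  imports Defs
begin

lemma sum_sq: "(\<Sum>p=h..h+r. g p)^2 = (\<Sum>p=h..h+r. (g p)^2 + 2 * g p * (\<Sum>i\<in>{h..<p}. g i)) " for g :: "nat \<Rightarrow> real"
proof (induction r)
  case 0
  then show ?case by simp
next
  case (Suc r)
  have e: "{h..<Suc (h + r)} = {h..h+r}" by auto
  show ?case using Suc by (simp add: e power2_eq_square algebra_simps)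
qed

lemma ind_int: fixes a b c :: real assumes "a \<le> c" "c \<le> b"
  shows "((\<lambda>s. if c \<le> s then 1 else 0::real) has_integral (b - c)) {a..b}"
proof -
  have 0: "((\<lambda>s. 0::real) has_integral 0) {a..c}" by (rule has_integral_0)
  have 1: "((\<lambda>s. if c \<le> s then 1 else 0::real) has_integral 0) {a..c}"
    by (rule has_integral_spike_finite[OF _ _ 0, of "{c}"]) auto
  have "((\<lambda>s. 1::real) has_integral (b - c)) {c..b}" using has_integral_const_real[of "1::real" c b] assms by simp
  then have 2: "((\<lambda>s. if c \<le> s then 1 else 0::real) has_integral (b - c)) {c..b}"
    by (rule has_integral_eq[rotated]) auto
  show ?thesis using has_integral_combine[OF assms 1 2] by simp
qed

lemma lin_int: fixes a b :: real assumes "a \<le> b"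
  shows "((\<lambda>s. s - a) has_integral ((b - a)^2 / 2)) {a..b}"
proof -
  have "((\<lambda>s. s - a) has_integral ((\<lambda>s. (s - a)^2 / 2) b - (\<lambda>s. (s - a)^2 / 2) a)) {a..b}"
  proof (rule fundamental_theorem_of_calculus[OF assms])
    fix s assume "s \<in> {a..b}"
    show "((\<lambda>s. (s - a)^2 / 2) has_vector_derivative (s - a)) (at s within {a..b})"
      by (auto intro!: derivative_eq_intros simp: has_real_derivative_iff_has_vector_derivative[symmetric])
  qed
  then show ?thesis by simp
qed

locale cset =
  fixes n :: nat and x xi :: "nat \<Rightarrow> real" and \<pi> :: "nat \<Rightarrow> nat" and q :: real and h r :: nat
  assumes n1: "1 \<le> n"
    and xpos0: "\<And>i. 1 \<le> i \<Longrightarrow> i \<le> n \<Longrightarrow> 0 < x i"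
    and xipos0: "\<And>i. 1 \<le> i \<Longrightarrow> i \<le> n \<Longrightarrow> 0 < xi i"
    and bij: "bij_betw \<pi> {1..n} {1..n}"
    and xiinc: "\<And>i j. 1 \<le> i \<Longrightarrow> i < j \<Longrightarrow> j \<le> n \<Longrightarrow> xi (\<pi> i) < xi (\<pi> j)"
    and qpos: "0 < q"
    and h1: "1 \<le> h" and hrn: "h + r \<le> n"
    and hroot: "is_root x xi \<pi> q h"
    and nonroot: "\<And>m. h < m \<Longrightarrow> m \<le> h + r \<Longrightarrow> \<not> is_root x xi \<pi> q m"
    and nxt: "h + r = n \<or> is_root x xi \<pi> q (h + r + 1)"
begin

definition X where "X i = x (\<pi> i)"
definition Xi where "Xi i = xi (\<pi> i)"
definition G where "G t i = t * bnd x xi \<pi> t i"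
abbreviation rt where "rt t i \<equiv> is_root x xi \<pi> t i"

lemma Xpos: "1 \<le> i \<Longrightarrow> i \<le> n \<Longrightarrow> 0 < X i"
  unfolding X_def using bij xpos0 by (meson atLeastAtMost_iff bij_betwE)

lemma Xipos: "1 \<le> i \<Longrightarrow> i \<le> n \<Longrightarrow> 0 < Xi i"
  unfolding Xi_def using bij xipos0 by (meson atLeastAtMost_iff bij_betwE)

lemma Xiinc: "1 \<le> i \<Longrightarrow> i < j \<Longrightarrow> j \<le> n \<Longrightarrow> Xi i < Xi j"
  unfolding Xi_def using xiinc by blast

lemma Ximono: "1 \<le> i \<Longrightarrow> i \<le> j \<Longrightarrow> j \<le> n \<Longrightarrow> Xi i \<le> Xi j"
  using Xiinc by (metis le_less)

lemma G1: "0 < t \<Longrightarrow> G t (Suc 0) = Xi 1 + t * X 1"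
  unfolding G_def X_def Xi_def by (simp add: algebra_simps)

lemma GS: assumes "0 < t" "1 \<le> i" shows "G t (Suc i) = max (Xi (Suc i)) (G t i) + t * X (Suc i)"
proof -
  obtain k where k: "i = Suc k" using assms(2) by (cases i) auto
  show ?thesis using assms(1) unfolding k G_def X_def Xi_def
    by (auto simp: algebra_simps max_def field_simps)
qed

lemma rt_iff: assumes "0 < t" shows "rt t i \<longleftrightarrow> i = 1 \<or> (2 \<le> i \<and> G t (i - 1) < Xi i)"
  unfolding is_root_def G_def Xi_def using assms by (auto simp: field_simps)

lemma G_mono_strict: assumes "0 < s" "s < t" "1 \<le> i" "i \<le> n" shows "G s i < G t i"
  using assms(3,4)
proof (induction i rule: nat_induct_at_least)
  case base
  then show ?case using G1[of s] G1[of t] assms Xpos[of 1] by simp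
next
  case (Suc i)
  have "G s i < G t i" using Suc by simp
  moreover have "s * X (Suc i) < t * X (Suc i)" using Xpos[of "Suc i"] Suc assms by simp
  ultimately show ?case using GS[of s i] GS[of t i] Suc assms by (simp add: max_def)
qed

lemma G_mono: "0 < s \<Longrightarrow> s \<le> t \<Longrightarrow> 1 \<le> i \<Longrightarrow> i \<le> n \<Longrightarrow> G s i \<le> G t i"
  using G_mono_strict by (metis le_less)

lemma rt_anti: assumes "0 < s" "s \<le> t" "rt t m" "m \<le> n" shows "rt s m"
proof -
  have "m = 1 \<or> (2 \<le> m \<and> G t (m - 1) < Xi m)" using rt_iff assms by auto
  moreover have "2 \<le> m \<Longrightarrow> G s (m - 1) \<le> G t (m - 1)" using G_mono assms by auto
  ultimately show ?thesis using rt_iff assms by force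
qed

lemma G_cont: assumes "1 \<le> i" "i \<le> n" shows "continuous_on {0<..} (\<lambda>t. G t i)"
  using assms
proof (induction i rule: nat_induct_at_least)
  case base
  have "continuous_on {0<..} (\<lambda>t. Xi 1 + t * X 1)" by (intro continuous_intros)
  then show ?case by (rule continuous_on_eq) (simp add: G1)
next
  case (Suc i)
  have "continuous_on {0<..} (\<lambda>t. max (Xi (Suc i)) (G t i) + t * X (Suc i))"
    using Suc by (intro continuous_intros) auto
  then show ?case by (rule continuous_on_eq) (use GS Suc in auto)
qed

lemma G_upper: assumes "1 \<le> i" "i \<le> n" "0 < t" shows "G t i \<le> Xi i + t * (\<Sum>m=1..i. X m)"
  using assms(1,2)
proof (induction i rule: nat_induct_at_least)
  case base
  then show ?case using G1 assms by simp
next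
  case (Suc i)
  have "Xi i \<le> Xi (Suc i)" using Ximono Suc by simp
  moreover have "0 \<le> t * (\<Sum>m=1..i. X m)" using assms Xpos Suc by (intro mult_nonneg_nonneg sum_nonneg) (auto intro: less_imp_le)
  ultimately show ?case using GS[of t i] Suc assms by (auto simp: max_def algebra_simps)
qed

lemma G_lower: assumes "1 \<le> j" "j \<le> i" "i \<le> n" "0 < t" shows "Xi j + t * (\<Sum>m=j..i. X m) \<le> G t i"
  using assms(2,3)
proof (induction i rule: nat_induct_at_least)
  case base
  show ?case
  proof (cases "j = 1")
    case True then show ?thesis using G1 assms by simp
  next
    case False
    then obtain k where k: "j = Suc k" "1 \<le> k" using assms(1) by (cases j) auto
    then show ?thesis using GS[of t k] assms by (simp add: max_def)
  qed
next
  case (Suc i)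
  then show ?case using GS[of t i] assms by (auto simp: max_def algebra_simps)
qed

lemma rt1: "rt t 1" unfolding is_root_def by simp

lemma nonrt_iff: "0 < t \<Longrightarrow> 2 \<le> m \<Longrightarrow> \<not> rt t m \<longleftrightarrow> Xi m \<le> G t (m - 1)"
  using rt_iff by auto

lemma G_block: assumes "0 < t" "1 \<le> J" "J + d \<le> n" "J = 1 \<or> G t (J - 1) \<le> Xi J"
  "\<And>m. J < m \<Longrightarrow> m \<le> J + d \<Longrightarrow> Xi m \<le> G t (m - 1)"
  shows "G t (J + d) = Xi J + t * (\<Sum>i=J..J+d. X i)"
  using assms(3,5)
proof (induction d)
  case 0
  show ?case
  proof (cases "J = 1")
    case True then show ?thesis using G1 assms by simp
  next
    case False
    then obtain k where k: "J = Suc k" "1 \<le> k" using assms(2) by (cases J) auto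
    then show ?thesis using GS[of t k] assms False by (simp add: max_def)
  qed
next
  case (Suc d)
  have "G t (J + d) = Xi J + t * (\<Sum>i=J..J+d. X i)" using Suc by simp
  moreover have "Xi (Suc (J + d)) \<le> G t (J + d)" using Suc(3)[of "Suc (J + d)"] by simp
  ultimately show ?case using GS[of t "J + d"] assms by (simp add: max_def algebra_simps)
qed

lemma tau_ex: assumes "h < m" "m \<le> h + r" shows "\<exists>t. 0 < t \<and> t \<le> q \<and> G t (m - 1) = Xi m"
proof -
  have m2: "2 \<le> m" "m \<le> n" using assms h1 hrn by auto
  have up: "Xi m \<le> G q (m - 1)" using nonroot[OF assms] nonrt_iff[OF qpos m2(1)] by simp
  define S where "S = (\<Sum>i=1..m-1. X i)"
  have S0: "0 \<le> S" unfolding S_def using Xpos m2 by (intro sum_nonneg) (auto intro: less_imp_le)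
  define d where "d = Xi m - Xi (m - 1)"
  have d0: "0 < d" unfolding d_def using Xiinc[of "m - 1" m] m2 by simp
  define t0 where "t0 = min q (d / (S + 1))"
  have t0: "0 < t0" "t0 \<le> q" unfolding t0_def using qpos d0 S0 by auto
  have "t0 * (S + 1) \<le> d" unfolding t0_def using S0 d0
    by (metis add_nonneg_pos min.cobounded2 mult.commute pos_le_divide_eq zero_less_one)
  then have "t0 * S < d" using t0 by (simp add: algebra_simps)
  moreover have "G t0 (m - 1) \<le> Xi (m - 1) + t0 * S" using G_upper[of "m - 1" t0] m2 t0 unfolding S_def by simp
  ultimately have lo: "G t0 (m - 1) \<le> Xi m" unfolding d_def by simp
  have "continuous_on {0<..} (\<lambda>t. G t (m - 1))" using G_cont[of "m - 1"] m2 by simp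
  moreover have "{t0..q} \<subseteq> {0<..}" using t0 by auto
  ultimately have "continuous_on {t0..q} (\<lambda>t. G t (m - 1))" by (rule continuous_on_subset)
  then obtain t where "t0 \<le> t" "t \<le> q" "G t (m - 1) = Xi m"
    using IVT'[of "\<lambda>t. G t (m - 1)" t0 "Xi m" q] lo up t0 by auto
  then show ?thesis using t0 by (intro exI[of _ t]) auto
qed

definition tau where "tau m = (SOME t. 0 < t \<and> t \<le> q \<and> G t (m - 1) = Xi m)"

lemma tau: assumes "h < m" "m \<le> h + r" shows "0 < tau m" "tau m \<le> q" "G (tau m) (m - 1) = Xi m"
  using someI_ex[OF tau_ex[OF assms]] unfolding tau_def by auto

lemma rt_tau: assumes "h < m" "m \<le> h + r" "0 < t" shows "rt t m \<longleftrightarrow> t < tau m"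
proof -
  have m2: "2 \<le> m" "m \<le> n" using assms h1 hrn by auto
  have "rt t m \<longleftrightarrow> G t (m - 1) < G (tau m) (m - 1)" using rt_iff[OF assms(3)] tau(3)[OF assms(1,2)] m2 by auto
  also have "\<dots> \<longleftrightarrow> t < tau m"
  proof
    assume a: "G t (m - 1) < G (tau m) (m - 1)"
    show "t < tau m"
    proof (rule ccontr)
      assume "\<not> t < tau m"
      then have "G (tau m) (m - 1) \<le> G t (m - 1)" using G_mono[of "tau m" t "m - 1"] tau[OF assms(1,2)] m2 by simp
      then show False using a by simp
    qed
  next
    assume "t < tau m"
    then show "G t (m - 1) < G (tau m) (m - 1)" using G_mono_strict[of t "tau m" "m - 1"] m2 assms(3) by simp
  qed
  finally show ?thesis .
qed

lemma comp_sub: assumes "1 \<le> j" "j \<le> k" "k < l" "l \<le> n"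
  shows "{j..k} \<subseteq> comp n x xi \<pi> t l \<longleftrightarrow> (\<forall>m. j < m \<and> m \<le> l \<longrightarrow> \<not> rt t m)"
proof
  assume "{j..k} \<subseteq> comp n x xi \<pi> t l"
  then have "j \<in> comp n x xi \<pi> t l" using assms by auto
  then show "\<forall>m. j < m \<and> m \<le> l \<longrightarrow> \<not> rt t m" unfolding comp_def using assms by auto
next
  assume "\<forall>m. j < m \<and> m \<le> l \<longrightarrow> \<not> rt t m"
  then show "{j..k} \<subseteq> comp n x xi \<pi> t l" unfolding comp_def using assms by auto
qed

lemma comp_eq: assumes "1 \<le> j" "j \<le> k" "k < n"
  shows "comp n x xi \<pi> t j = {j..k} \<longleftrightarrow> rt t j \<and> rt t (Suc k) \<and> (\<forall>m. j < m \<and> m \<le> k \<longrightarrow> \<not> rt t m)"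
proof
  assume A: "comp n x xi \<pi> t j = {j..k}"
  have "k \<in> comp n x xi \<pi> t j" using A assms by auto
  then have 1: "\<forall>m. j < m \<and> m \<le> k \<longrightarrow> \<not> rt t m" unfolding comp_def using assms by auto
  have "Suc k \<notin> comp n x xi \<pi> t j" using A by auto
  then obtain m where "j < m" "m \<le> Suc k" "rt t m" unfolding comp_def using assms by auto
  then have 2: "rt t (Suc k)"
  proof -
    assume m: "j < m" "m \<le> Suc k" "rt t m"
    have "\<not> m \<le> k" using 1 m by blast
    then have "m = Suc k" using m by simp
    then show ?thesis using m by simp
  qed
  have 3: "rt t j"
  proof (cases "j = 1")
    case True then show ?thesis using rt1 by simp
  next
    case False
    have "j - 1 < j" using assms False by simp
    then have "j - 1 \<notin> comp n x xi \<pi> t j" using A by auto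
    then obtain m where "j - 1 < m" "m \<le> j" "rt t m" unfolding comp_def using assms False by auto
    moreover have "m = j" using \<open>j - 1 < m\<close> \<open>m \<le> j\<close> by arith
    ultimately show ?thesis by simp
  qed
  show "rt t j \<and> rt t (Suc k) \<and> (\<forall>m. j < m \<and> m \<le> k \<longrightarrow> \<not> rt t m)" using 1 2 3 by blast
next
  assume A: "rt t j \<and> rt t (Suc k) \<and> (\<forall>m. j < m \<and> m \<le> k \<longrightarrow> \<not> rt t m)"
  show "comp n x xi \<pi> t j = {j..k}"
  proof (intro set_eqI iffI)
    fix i assume "i \<in> comp n x xi \<pi> t j"
    then have i: "1 \<le> i" "i \<le> n" "\<forall>m. min j i < m \<and> m \<le> max j i \<longrightarrow> \<not> rt t m" unfolding comp_def by auto
    have "\<not> i < j" using i(3)[rule_format, of j] A by auto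
    moreover have "\<not> k < i" using i(3)[rule_format, of "Suc k"] A assms by auto
    ultimately show "i \<in> {j..k}" by auto
  next
    fix i assume "i \<in> {j..k}"
    then show "i \<in> comp n x xi \<pi> t j" unfolding comp_def using A assms by auto
  qed
qed

lemma comp_disj: assumes "j \<le> k" "k < l" "rt t (Suc k)"
  shows "comp n x xi \<pi> t l \<inter> {j..k} = {}"
proof (rule ccontr)
  assume "comp n x xi \<pi> t l \<inter> {j..k} \<noteq> {}"
  then obtain i where i: "i \<in> comp n x xi \<pi> t l" "i \<le> k" by auto
  then have "\<forall>m. min l i < m \<and> m \<le> max l i \<longrightarrow> \<not> rt t m" unfolding comp_def by auto
  then have "\<not> rt t (Suc k)" using i assms by auto
  then show False using assms by simp
qed


lemma merge_unique: assumes "merges_at n x xi \<pi> l j k t1" "merges_at n x xi \<pi> l j k t2"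
  "1 \<le> j" "j \<le> k" "k < l" "l \<le> n" shows "t1 = t2"
proof -
  have key: "\<not> a < b" if A: "merges_at n x xi \<pi> l j k a" and B: "merges_at n x xi \<pi> l j k b" for a b
  proof
    assume ab: "a < b"
    have a0: "0 < a" and "{j..k} \<subseteq> comp n x xi \<pi> a l" using A unfolding merges_at_def by auto
    then have "\<not> rt a (Suc k)" using comp_sub[of j k l a] assms by auto
    obtain e where e: "0 < e" "\<forall>t'. 0 < t' \<and> b - e < t' \<and> t' < b \<longrightarrow>
        comp n x xi \<pi> t' j = {j..k} \<and> comp n x xi \<pi> t' l \<inter> {j..k} = {}"
      using B unfolding merges_at_def by auto
    define t' where "t' = max a (b - e / 2)"
    have t': "0 < t'" "b - e < t'" "t' < b" "a \<le> t'" unfolding t'_def using e a0 ab by auto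
    then have "comp n x xi \<pi> t' j = {j..k}" using e by blast
    then have "rt t' (Suc k)" using comp_eq[of j k t'] assms by auto
    then have "rt a (Suc k)" using rt_anti[of a t' "Suc k"] t' a0 assms by auto
    then show False using \<open>\<not> rt a (Suc k)\<close> by simp
  qed
  show ?thesis using key[OF assms(1,2)] key[OF assms(2,1)] by simp
qed

definition V where "V l = {(j,k). h \<le> j \<and> j \<le> k \<and> k < l \<and> (j = h \<or> tau (Suc k) \<le> tau j) \<and>
   (\<forall>m. j < m \<and> m \<le> k \<longrightarrow> tau m < tau (Suc k)) \<and> (\<forall>m. Suc k < m \<and> m \<le> l \<longrightarrow> tau m \<le> tau (Suc k))}"

lemma merge_forward: assumes M: "merges_at n x xi \<pi> l j k t" and tq: "t \<le> q"
  and l: "h \<le> l" "l \<le> h + r" and jk: "1 \<le> j" "j \<le> k" "k < l"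
  shows "(j,k) \<in> V l" "t = tau (Suc k)"
proof -
  have ln: "l \<le> n" using l hrn by simp
  have t0: "0 < t" and "{j..k} \<subseteq> comp n x xi \<pi> t l" using M unfolding merges_at_def by auto
  then have nr: "\<And>m. j < m \<Longrightarrow> m \<le> l \<Longrightarrow> \<not> rt t m" using comp_sub[of j k l t] jk ln by auto
  obtain e where e: "0 < e" "\<forall>t'. 0 < t' \<and> t - e < t' \<and> t' < t \<longrightarrow>
        comp n x xi \<pi> t' j = {j..k} \<and> comp n x xi \<pi> t' l \<inter> {j..k} = {}"
    using M unfolding merges_at_def by auto
  have E: "rt t' j \<and> rt t' (Suc k) \<and> (\<forall>m. j < m \<and> m \<le> k \<longrightarrow> \<not> rt t' m)"
    if "0 < t'" "t - e < t'" "t' < t" for t'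
    using e that comp_eq[of j k t'] jk ln by auto
  have jh: "h \<le> j"
  proof (rule ccontr)
    assume "\<not> h \<le> j"
    then have "\<not> rt t h" using nr[of h] l by simp
    moreover have "rt t h" using rt_anti[of t q h] t0 tq hroot h1 hrn by simp
    ultimately show False by simp
  qed
  have tauI: "\<not> rt s m \<longleftrightarrow> tau m \<le> s" if "h < m" "m \<le> l" "0 < s" for m s
    using rt_tau[of m s] that l by auto
  have sk: "h < Suc k" "Suc k \<le> l" using jh jk by auto
  have a1: "tau (Suc k) \<le> t" using nr[of "Suc k"] tauI[OF sk t0] jk by simp
  have a2: "t \<le> tau (Suc k)"
  proof (rule ccontr)
    assume c: "\<not> t \<le> tau (Suc k)"
    define t' where "t' = max (tau (Suc k)) (t - e / 2)"
    have tp: "0 < t'" "t - e < t'" "t' < t" unfolding t'_def using c e tau(1)[of "Suc k"] sk l by auto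
    then have "rt t' (Suc k)" using E by blast
    then have "t' < tau (Suc k)" using rt_tau[of "Suc k" t'] sk l tp by simp
    then show False unfolding t'_def by simp
  qed
  show teq: "t = tau (Suc k)" using a1 a2 by simp
  define t' where "t' = max (t / 2) (t - e / 2)"
  have tp: "0 < t'" "t - e < t'" "t' < t" unfolding t'_def using e t0 by auto
  have c1: "tau m < tau (Suc k)" if "j < m" "m \<le> k" for m
  proof -
    have "\<not> rt t' m" using E[OF tp] that by blast
    then have "tau m \<le> t'" using tauI[of m t'] that jh jk tp by simp
    then show ?thesis using tp teq by simp
  qed
  have c2: "tau m \<le> tau (Suc k)" if "Suc k < m" "m \<le> l" for m
    using nr[of m] tauI[of m t] that jk jh t0 teq by simp
  have c3: "j = h \<or> tau (Suc k) \<le> tau j"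
  proof (rule ccontr)
    assume c: "\<not> (j = h \<or> tau (Suc k) \<le> tau j)"
    then have jh': "h < j" "j \<le> h + r" using jh jk l by auto
    define t'' where "t'' = max (tau j) (t - e / 2)"
    have tp: "0 < t''" "t - e < t''" "t'' < t" unfolding t''_def using c e tau(1)[OF jh'] teq by auto
    then have "rt t'' j" using E by blast
    then have "t'' < tau j" using rt_tau[OF jh' tp(1)] by simp
    then show False unfolding t''_def by simp
  qed
  show "(j,k) \<in> V l" unfolding V_def using jh jk c1 c2 c3 by auto
qed

lemma merge_backward: assumes V: "(j,k) \<in> V l" and l: "h \<le> l" "l \<le> h + r"
  shows "merges_at n x xi \<pi> l j k (tau (Suc k))"
proof -
  define t where "t = tau (Suc k)"
  have jk: "h \<le> j" "j \<le> k" "k < l" "j = h \<or> t \<le> tau j"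
    and c1: "\<And>m. j < m \<Longrightarrow> m \<le> k \<Longrightarrow> tau m < t"
    and c2: "\<And>m. Suc k < m \<Longrightarrow> m \<le> l \<Longrightarrow> tau m \<le> t"
    using V unfolding V_def t_def by auto
  have ln: "l \<le> n" using l hrn by simp
  have j1: "1 \<le> j" using jk h1 by simp
  have sk: "h < Suc k" "Suc k \<le> h + r" using jk l by auto
  have t0: "0 < t" "t \<le> q" using tau[OF sk] unfolding t_def by auto
  have "\<not> rt t m" if "j < m" "m \<le> l" for m
  proof -
    have m: "h < m" "m \<le> h + r" using that jk l by auto
    have "tau m \<le> t"
    proof (cases "m \<le> k")
      case True then show ?thesis using c1[of m] that by simp
    next
      case False
      then show ?thesis using c2[of m] that t_def by (cases "m = Suc k") auto
    qed
    then show ?thesis using rt_tau[OF m t0(1)] by simp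
  qed
  then have sub: "{j..k} \<subseteq> comp n x xi \<pi> t l" using comp_sub[of j k l t] j1 jk ln by auto
  define S where "S = insert 0 (tau ` {j<..k})"
  have Sfin: "finite S" "S \<noteq> {}" unfolding S_def by auto
  have "\<forall>s\<in>S. s < t" unfolding S_def using c1 t0 by auto
  then have Mt: "Max S < t" using Sfin by simp
  define e where "e = t - Max S"
  have e0: "0 < e" unfolding e_def using Mt by simp
  have "comp n x xi \<pi> t' j = {j..k} \<and> comp n x xi \<pi> t' l \<inter> {j..k} = {}"
    if tp: "0 < t'" "t - e < t'" "t' < t" for t'
  proof -
    have r1: "rt t' (Suc k)" using rt_tau[OF sk tp(1)] tp t_def by simp
    have r2: "rt t' j"
    proof (cases "j = h")
      case True then show ?thesis using rt_anti[of t' q h] tp t0 hroot h1 hrn by simp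
    next
      case False
      then have jh': "h < j" "j \<le> h + r" using jk l by auto
      then show ?thesis using rt_tau[OF jh' tp(1)] jk False tp by simp
    qed
    have r3: "\<not> rt t' m" if "j < m" "m \<le> k" for m
    proof -
      have m: "h < m" "m \<le> h + r" using that jk l by auto
      have "tau m \<in> S" unfolding S_def using that by auto
      then have "tau m \<le> Max S" using Sfin by simp
      then have "tau m \<le> t'" using tp unfolding e_def by simp
      then show ?thesis using rt_tau[OF m tp(1)] by simp
    qed
    have "comp n x xi \<pi> t' j = {j..k}" using comp_eq[of j k t'] j1 jk ln r1 r2 r3 by auto
    moreover have "comp n x xi \<pi> t' l \<inter> {j..k} = {}" using comp_disj[of j k l t'] jk r1 by simp
    ultimately show ?thesis by simp
  qed
  then show ?thesis unfolding merges_at_def t_def[symmetric] using t0 sub e0 by blast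
qed

lemma T_char: assumes l: "h \<le> l" "l \<le> h + r" and jk: "1 \<le> j" "j \<le> k" "k < l"
  shows "T_merge n x xi \<pi> l j k \<le> ereal q \<longleftrightarrow> (j,k) \<in> V l"
    and "(j,k) \<in> V l \<Longrightarrow> T_merge n x xi \<pi> l j k = ereal (tau (Suc k))"
proof -
  define M where "M = {t. merges_at n x xi \<pi> l j k t}"
  have T: "T_merge n x xi \<pi> l j k = Inf (ereal ` M)" unfolding T_merge_def M_def using jk by auto
  have ln: "l \<le> n" using l hrn by simp
  have single: "M = {t}" if "t \<in> M" for t
    using that merge_unique[of l j k] jk ln unfolding M_def by blast
  show 2: "T_merge n x xi \<pi> l j k = ereal (tau (Suc k))" if "(j,k) \<in> V l"
  proof -
    have "tau (Suc k) \<in> M" unfolding M_def using merge_backward[OF that l] by simp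
    then have "M = {tau (Suc k)}" using single by blast
    then show ?thesis using T by simp
  qed
  show "T_merge n x xi \<pi> l j k \<le> ereal q \<longleftrightarrow> (j,k) \<in> V l"
  proof
    assume A: "T_merge n x xi \<pi> l j k \<le> ereal q"
    have "M \<noteq> {}"
    proof
      assume "M = {}"
      then have "T_merge n x xi \<pi> l j k = \<infinity>" using T by (simp add: top_ereal_def)
      then show False using A by simp
    qed
    then obtain t where t: "t \<in> M" by auto
    then have "M = {t}" using single by blast
    then have "T_merge n x xi \<pi> l j k = ereal t" using T by simp
    then have "t \<le> q" using A by simp
    then show "(j,k) \<in> V l" using merge_forward[of l j k t] t l jk unfolding M_def by auto
  next
    assume "(j,k) \<in> V l"
    moreover then have "tau (Suc k) \<le> q" unfolding V_def using tau(2)[of "Suc k"] l h1 by auto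
    ultimately show "T_merge n x xi \<pi> l j k \<le> ereal q" using 2 by simp
  qed
qed


definition f where "f j k = (q - tau (Suc k)) * (\<Sum>i=j..k. X i)"
definition W where "W l = Xi h + q * (\<Sum>i\<in>{h..<l}. X i) - Xi l"

lemma V_fin: "finite (V l)"
proof -
  have "V l \<subseteq> {0..l} \<times> {0..l}" unfolding V_def by auto
  then show ?thesis by (rule finite_subset) auto
qed

lemma S_eq: assumes "h \<le> l" "l \<le> h + r" shows "(\<Sum>(j,k)\<in>V l. f j k) = W l"
  using assms
proof (induction l rule: less_induct)
  case (less l)
  show ?case
  proof (cases "l = h")
    case True
    then have "V l = {}" unfolding V_def by auto
    then show ?thesis unfolding W_def using True by simp
  next
    case False
    then have lh: "h < l" using less by simp
    have lr: "l \<le> h + r" using less by simp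
    define JS where "JS = {j \<in> {h..l-1}. j = h \<or> tau l \<le> tau j}"
    have "h \<in> JS" unfolding JS_def using lh by auto
    then have JSf: "finite JS" "JS \<noteq> {}" unfolding JS_def by auto
    define J where "J = Max JS"
    have "J \<in> JS" unfolding J_def using JSf by simp
    then have J: "h \<le> J" "J \<le> l - 1" "J = h \<or> tau l \<le> tau J" unfolding JS_def by auto
    have Jmax: "tau m < tau l" if "J < m" "m \<le> l - 1" for m
    proof (rule ccontr)
      assume "\<not> tau m < tau l"
      then have "m \<in> JS" unfolding JS_def using that J by auto
      then have "m \<le> J" unfolding J_def using JSf by simp
      then show False using that by simp
    qed
    have Sl: "Suc (l - 1) = l" using lh by simp
    have Vins: "V l = insert (J, l - 1) (V J)"
    proof (intro set_eqI iffI)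
      fix p assume "p \<in> V l"
      then obtain j k where p: "p = (j,k)" and jk: "h \<le> j" "j \<le> k" "k < l" "j = h \<or> tau (Suc k) \<le> tau j"
        and c1: "\<forall>m. j < m \<and> m \<le> k \<longrightarrow> tau m < tau (Suc k)"
        and c2: "\<forall>m. Suc k < m \<and> m \<le> l \<longrightarrow> tau m \<le> tau (Suc k)"
        unfolding V_def by auto
      show "p \<in> insert (J, l - 1) (V J)"
      proof (cases "k = l - 1")
        case True
        then have jl: "j = h \<or> tau l \<le> tau j" using jk Sl by simp
        have "j \<in> JS" unfolding JS_def using jk jl True by auto
        then have "j \<le> J" unfolding J_def using JSf by simp
        moreover have "\<not> j < J"
        proof
          assume "j < J"
          then have "tau J < tau l" using c1 J True Sl by auto
          moreover have "J \<noteq> h" using \<open>j < J\<close> jk by simp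
          ultimately show False using J by simp
        qed
        ultimately show ?thesis using p True by simp
      next
        case False
        then have kl: "Suc k < l" using jk by simp
        then have tl: "tau l \<le> tau (Suc k)" using c2 by simp
        have "Suc k \<le> J"
        proof (rule ccontr)
          assume "\<not> Suc k \<le> J"
          then have "tau (Suc k) < tau l" using Jmax[of "Suc k"] kl by simp
          then show False using tl by simp
        qed
        then have "(j,k) \<in> V J" unfolding V_def using jk c1 c2 J lh by auto
        then show ?thesis using p by simp
      qed
    next
      fix p assume "p \<in> insert (J, l - 1) (V J)"
      then show "p \<in> V l"
      proof
        assume p: "p = (J, l - 1)"
        show ?thesis unfolding p V_def using J Jmax Sl lh by auto
      next
        assume "p \<in> V J"
        then obtain j k where p: "p = (j,k)" and jk: "h \<le> j" "j \<le> k" "k < J" "j = h \<or> tau (Suc k) \<le> tau j"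
          and c1: "\<forall>m. j < m \<and> m \<le> k \<longrightarrow> tau m < tau (Suc k)"
          and c2: "\<forall>m. Suc k < m \<and> m \<le> J \<longrightarrow> tau m \<le> tau (Suc k)"
          unfolding V_def by auto
        have Jh: "J \<noteq> h" using jk by simp
        then have tlJ: "tau l \<le> tau J" using J by simp
        have tJ: "tau J \<le> tau (Suc k)" using c2 jk by (cases "J = Suc k") auto
        have "\<forall>m. Suc k < m \<and> m \<le> l \<longrightarrow> tau m \<le> tau (Suc k)"
        proof (intro allI impI)
          fix m assume m: "Suc k < m \<and> m \<le> l"
          show "tau m \<le> tau (Suc k)"
          proof (cases "m \<le> J")
            case True then show ?thesis using c2 m by simp
          next
            case False
            show ?thesis
            proof (cases "m = l")
              case True then show ?thesis using tlJ tJ by simp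
            next
              case False
              then have "m \<le> l - 1" using m by arith
              then have "tau m < tau l" using Jmax[of m] m \<open>\<not> m \<le> J\<close> by simp
              then show ?thesis using tlJ tJ by simp
            qed
          qed
        qed
        then show ?thesis unfolding p V_def using jk c1 J by auto
      qed
    qed
    have notin: "(J, l - 1) \<notin> V J" unfolding V_def using J by auto
    have IH: "(\<Sum>(j,k)\<in>V J. f j k) = W J" using less.IH[of J] J lh lr by simp
    have sum1: "(\<Sum>(j,k)\<in>V l. f j k) = f J (l - 1) + W J"
      unfolding Vins using notin V_fin IH by simp
    have lhr: "h < l" "l \<le> h + r" using lh lr by auto
    have t0: "0 < tau l" "tau l \<le> q" using tau[OF lhr] by auto
    define d where "d = l - 1 - J"
    have Jd: "J + d = l - 1" unfolding d_def using J by simp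
    have J1: "1 \<le> J" using J h1 by simp
    have rootish: "J = 1 \<or> G (tau l) (J - 1) \<le> Xi J"
    proof (cases "J = h")
      case True
      show ?thesis
      proof (cases "h = 1")
        case True then show ?thesis using \<open>J = h\<close> by simp
      next
        case False
        then have "G q (h - 1) < Xi h" using rt_iff[OF qpos, of h] hroot by auto
        moreover have "G (tau l) (h - 1) \<le> G q (h - 1)" using G_mono[of "tau l" q "h - 1"] t0 False h1 hrn by simp
        ultimately show ?thesis using True by simp
      qed
    next
      case False
      then have Jh': "h < J" "J \<le> h + r" using J lr by auto
      have "tau l \<le> tau J" using J False by simp
      then have "G (tau l) (J - 1) \<le> G (tau J) (J - 1)" using G_mono[of "tau l" "tau J" "J - 1"] t0 Jh' h1 hrn by simp
      then show ?thesis using tau(3)[OF Jh'] by simp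
    qed
    have nrm: "Xi m \<le> G (tau l) (m - 1)" if "J < m" "m \<le> J + d" for m
    proof -
      have m: "h < m" "m \<le> h + r" using that J Jd lr by auto
      have "tau m < tau l" using Jmax that Jd by simp
      then have "\<not> rt (tau l) m" using rt_tau[OF m t0(1)] by simp
      then show ?thesis using nonrt_iff[OF t0(1), of m] m h1 by simp
    qed
    have Jdn: "J + d \<le> n" using Jd lr hrn by simp
    have "G (tau l) (J + d) = Xi J + tau l * (\<Sum>i=J..J+d. X i)"
      by (rule G_block[OF t0(1) J1 Jdn rootish nrm])
    then have key: "Xi l = Xi J + tau l * (\<Sum>i=J..l-1. X i)" using tau(3)[OF lhr] Jd by simp
    have iv: "{J..l-1} = {J..<l}" using lh by auto
    have split: "(\<Sum>i\<in>{h..<l}. X i) = (\<Sum>i\<in>{h..<J}. X i) + (\<Sum>i\<in>{J..<l}. X i)"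
      using sum.atLeastLessThan_concat[of h J l X] J lh by simp
    have "f J (l - 1) + W J = W l" unfolding f_def W_def using key split iv Sl by (simp add: algebra_simps)
    then show ?thesis using sum1 by simp
  qed
qed


definition a where "a = Xi h / q"
definition MM where "MM = (\<Sum>i=h..h+r. X i)"
definition Q where "Q u = {p \<in> {1..n}. Xi p / q \<le> u}"
definition CC where "CC = (\<Sum>p\<in>{1..<h}. X p) - a"

lemma Xnn: "p \<in> {1..n} \<Longrightarrow> 0 \<le> X p" using Xpos by (auto intro: less_imp_le)

lemma Zw_eq: "Zw n x xi q u = (\<Sum>p\<in>Q u. X p) - u"
proof -
  have "(\<Sum>i=1..n. x i * (if xi i / q \<le> u then 1 else 0)) = (\<Sum>p=1..n. X p * (if Xi p / q \<le> u then 1 else 0))"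
    unfolding X_def Xi_def using sum.reindex_bij_betw[OF bij, of "\<lambda>i. x i * (if xi i / q \<le> u then 1 else 0)"] by simp
  also have "\<dots> = (\<Sum>p\<in>Q u. X p)" unfolding Q_def by (subst sum.inter_filter) (auto intro: sum.cong)
  finally show ?thesis unfolding Zw_def by simp
qed

lemma Gq_block: assumes "h \<le> p" "p \<le> h + r" shows "G q p = Xi h + q * (\<Sum>i=h..p. X i)"
proof -
  have rootish: "h = 1 \<or> G q (h - 1) \<le> Xi h"
    using hroot rt_iff[OF qpos, of h] by auto
  have nr: "Xi m \<le> G q (m - 1)" if "h < m" "m \<le> h + (p - h)" for m
    using nonroot[of m] nonrt_iff[OF qpos, of m] that assms h1 by auto
  have "G q (h + (p - h)) = Xi h + q * (\<Sum>i=h..h + (p - h). X i)"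
    by (rule G_block[OF qpos h1 _ rootish nr]) (use assms hrn in simp)
  then show ?thesis using assms by simp
qed

lemma F2: assumes "h \<le> p" "p \<le> h + r" shows "Xi p / q \<le> a + (\<Sum>i\<in>{h..<p}. X i)"
proof (cases "p = h")
  case True then show ?thesis unfolding a_def by simp
next
  case False
  then have p: "h < p" using assms by simp
  have "Xi p \<le> G q (p - 1)" using nonroot[OF p assms(2)] nonrt_iff[OF qpos, of p] p h1 by simp
  also have "\<dots> = Xi h + q * (\<Sum>i=h..p-1. X i)" using Gq_block[of "p - 1"] p assms by simp
  also have "(\<Sum>i=h..p-1. X i) = (\<Sum>i\<in>{h..<p}. X i)" using p by (intro sum.cong) auto
  finally show ?thesis unfolding a_def using qpos by (simp add: field_simps)
qed

lemma F3: assumes "h + r < p" "p \<le> n" shows "a + MM < Xi p / q"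
proof -
  have "h + r < n" using assms by simp
  then have "rt q (h + r + 1)" using nxt by simp
  then have "G q (h + r) < Xi (h + r + 1)" using rt_iff[OF qpos, of "h + r + 1"] h1 by auto
  moreover have "Xi (h + r + 1) \<le> Xi p" using Ximono[of "h + r + 1" p] assms by simp
  ultimately have "Xi h + q * MM < Xi p" using Gq_block[of "h + r"] unfolding MM_def by simp
  then have "(Xi h + q * MM) / q < Xi p / q" using qpos by (simp add: divide_strict_right_mono)
  moreover have "(Xi h + q * MM) / q = a + MM" unfolding a_def using qpos by (simp add: field_simps)
  ultimately show ?thesis by simp
qed

lemma F4: assumes "1 \<le> j" "j < h" shows "Xi j + q * (\<Sum>i=j..h-1. X i) < Xi h"
proof -
  have "Xi j + q * (\<Sum>i=j..h-1. X i) \<le> G q (h - 1)" using G_lower[of j "h - 1" q] assms qpos hrn by simp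
  also have "\<dots> < Xi h" using hroot rt_iff[OF qpos, of h] assms by auto
  finally show ?thesis .
qed

lemma a_pos: "0 < a" unfolding a_def using Xipos[of h] h1 hrn qpos by simp

lemma MM_nn: "0 \<le> MM" unfolding MM_def using Xnn hrn h1 by (intro sum_nonneg) auto

lemma low_bound: assumes "0 \<le> u" "u \<le> a + MM" shows "CC \<le> Zw n x xi q u"
proof (cases "u < a")
  case True
  define A where "A = {p \<in> {1..<h}. u < Xi p / q}"
  define B where "B = {p \<in> {1..<h}. Xi p / q \<le> u}"
  have AB: "(\<Sum>p\<in>B. X p) + (\<Sum>p\<in>A. X p) = (\<Sum>p\<in>{1..<h}. X p)"
  proof -
    have "B \<union> A = {1..<h}" "B \<inter> A = {}" unfolding A_def B_def by auto
    then show ?thesis using sum.union_disjoint[of B A X] unfolding A_def B_def by auto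
  qed
  have Aub: "(\<Sum>p\<in>A. X p) \<le> a - u"
  proof (cases "A = {}")
    case True then show ?thesis using \<open>u < a\<close> by simp
  next
    case False
    have Af: "finite A" unfolding A_def by simp
    define j where "j = Min A"
    have "j \<in> A" unfolding j_def using Af False by simp
    then have j: "1 \<le> j" "j < h" "u < Xi j / q" unfolding A_def by auto
    have "A = {j..h-1}"
    proof (intro set_eqI iffI)
      fix p assume pA: "p \<in> A" then have "j \<le> p" unfolding j_def using Af by simp
      moreover have "p \<in> {1..<h}" using pA unfolding A_def by simp
      ultimately show "p \<in> {j..h-1}" by auto
    next
      fix p assume p: "p \<in> {j..h-1}"
      then have "Xi j \<le> Xi p" using Ximono[of j p] j hrn by auto
      then have "Xi j / q \<le> Xi p / q" using qpos by (simp add: divide_right_mono)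
      then show "p \<in> A" unfolding A_def using p j by auto
    qed
    then have "q * (\<Sum>p\<in>A. X p) < Xi h - Xi j" using F4[OF j(1,2)] by simp
    then have "(\<Sum>p\<in>A. X p) < Xi h / q - Xi j / q" using qpos by (simp add: field_simps)
    then show ?thesis using j unfolding a_def by simp
  qed
  have "B \<subseteq> Q u" unfolding B_def Q_def using hrn by auto
  then have "(\<Sum>p\<in>B. X p) \<le> (\<Sum>p\<in>Q u. X p)" by (intro sum_mono2) (auto simp: Q_def intro: Xnn)
  then show ?thesis unfolding Zw_eq CC_def using AB Aub by simp
next
  case False
  define D where "D = {p \<in> {h..h+r}. Xi p / q \<le> u}"
  have hD: "h \<in> D" using False unfolding D_def a_def by simp
  have Df: "finite D" unfolding D_def by simp
  define ps where "ps = Max D"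
  have "ps \<in> D" unfolding ps_def using Df hD by (intro Max_in) auto
  then have ps: "h \<le> ps" "ps \<le> h + r" "Xi ps / q \<le> u" unfolding D_def by auto
  have Deq: "D = {h..ps}"
  proof (intro set_eqI iffI)
    fix p assume "p \<in> D" then have "p \<le> ps" "h \<le> p" unfolding ps_def D_def using Df by auto
    then show "p \<in> {h..ps}" by auto
  next
    fix p assume p: "p \<in> {h..ps}"
    then have "Xi p \<le> Xi ps" using Ximono[of p ps] ps h1 hrn by auto
    then have "Xi p / q \<le> Xi ps / q" using qpos by (simp add: divide_right_mono)
    then show "p \<in> D" unfolding D_def using p ps by auto
  qed
  have Dlb: "u - a \<le> (\<Sum>p\<in>D. X p)"
  proof (cases "ps = h + r")
    case True then show ?thesis using assms Deq unfolding MM_def by simp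
  next
    case False
    then have p1: "h \<le> Suc ps" "Suc ps \<le> h + r" using ps by auto
    have "Suc ps \<notin> D" using Deq by auto
    then have "u < Xi (Suc ps) / q" unfolding D_def using p1 by auto
    moreover have "Xi (Suc ps) / q \<le> a + (\<Sum>i\<in>{h..<Suc ps}. X i)" using F2[OF p1] .
    moreover have "{h..<Suc ps} = D" using Deq by auto
    ultimately show ?thesis by simp
  qed
  have sub: "{1..<h} \<union> D \<subseteq> Q u"
  proof
    fix p assume "p \<in> {1..<h} \<union> D"
    then show "p \<in> Q u"
    proof
      assume p: "p \<in> {1..<h}"
      then have "Xi p \<le> Xi h" using Ximono[of p h] hrn by auto
      then have "Xi p / q \<le> a" unfolding a_def using qpos by (simp add: divide_right_mono)
      then show ?thesis unfolding Q_def using p False hrn by auto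
    next
      assume "p \<in> D" then show ?thesis unfolding Q_def D_def using h1 hrn by auto
    qed
  qed
  have "(\<Sum>p\<in>{1..<h} \<union> D. X p) = (\<Sum>p\<in>{1..<h}. X p) + (\<Sum>p\<in>D. X p)"
    by (rule sum.union_disjoint) (auto simp: D_def)
  moreover have "(\<Sum>p\<in>{1..<h} \<union> D. X p) \<le> (\<Sum>p\<in>Q u. X p)"
    using sub by (intro sum_mono2) (auto simp: Q_def intro: Xnn)
  ultimately show ?thesis unfolding Zw_eq CC_def using Dlb by simp
qed


lemma prev_ok: defines "pv \<equiv> (if h = 1 then 0 else Xi (h - 1) / q)"
  shows "0 \<le> pv" "pv < a" "\<And>u. pv < u \<Longrightarrow> u < a \<Longrightarrow> Zw n x xi q u = (\<Sum>p\<in>{1..<h}. X p) - u"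
proof -
  show "0 \<le> pv" unfolding pv_def using Xipos[of "h - 1"] qpos h1 hrn by (auto intro: less_imp_le)
  show "pv < a" unfolding pv_def a_def using Xiinc[of "h - 1" h] a_pos[unfolded a_def] qpos h1 hrn
    by (auto simp: divide_strict_right_mono)
  fix u assume u: "pv < u" "u < a"
  have "Q u = {1..<h}"
  proof (intro set_eqI iffI)
    fix p assume p: "p \<in> Q u"
    have "\<not> h \<le> p"
    proof
      assume "h \<le> p"
      then have "Xi h \<le> Xi p" using Ximono[of h p] p h1 unfolding Q_def by auto
      then have "a \<le> Xi p / q" unfolding a_def using qpos by (simp add: divide_right_mono)
      then show False using p u unfolding Q_def by auto
    qed
    then show "p \<in> {1..<h}" using p unfolding Q_def by auto
  next
    fix p assume p: "p \<in> {1..<h}"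
    then have "Xi p \<le> Xi (h - 1)" using Ximono[of p "h - 1"] hrn by auto
    then have "Xi p / q \<le> Xi (h - 1) / q" using qpos by (simp add: divide_right_mono)
    moreover have "h \<noteq> 1" using p by auto
    ultimately have "Xi p / q \<le> u" using u unfolding pv_def by auto
    then show "p \<in> Q u" unfolding Q_def using p hrn by auto
  qed
  then show "Zw n x xi q u = (\<Sum>p\<in>{1..<h}. X p) - u" unfolding Zw_eq by simp
qed

lemma Inf_eq: assumes "a \<le> s" "s \<le> a + MM" shows "Inf (Zw n x xi q ` {0..s}) = CC"
proof (rule cInf_eq_non_empty)
  show "Zw n x xi q ` {0..s} \<noteq> {}" using assms a_pos by auto
next
  fix v assume "v \<in> Zw n x xi q ` {0..s}"
  then show "CC \<le> v" using low_bound assms by auto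
next
  fix y assume y: "\<And>v. v \<in> Zw n x xi q ` {0..s} \<Longrightarrow> y \<le> v"
  define pv where "pv = (if h = 1 then 0 else Xi (h - 1) / q)"
  note P = prev_ok[folded pv_def]
  show "y \<le> CC"
  proof (rule ccontr)
    assume c: "\<not> y \<le> CC"
    define e where "e = y - CC"
    have e0: "0 < e" unfolding e_def using c by simp
    define u where "u = (max pv (a - e) + a) / 2"
    have u: "pv < u" "u < a" "a - e < u" "0 \<le> u" "u \<le> s"
      unfolding u_def using P(1,2) e0 assms by auto
    have "Zw n x xi q u = (\<Sum>p\<in>{1..<h}. X p) - u" using P(3) u by simp
    also have "\<dots> < y" using u unfolding e_def CC_def by simp
    finally have "Zw n x xi q u < y" .
    moreover have "y \<le> Zw n x xi q u" using y u by auto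
    ultimately show False by simp
  qed
qed

lemma Bw_eq: assumes "a \<le> s" "s \<le> a + MM"
  shows "Bw n x xi q s = (\<Sum>p=h..h+r. X p * (if Xi p / q \<le> s then 1 else 0)) - (s - a)"
proof -
  define D where "D = {p \<in> {h..h+r}. Xi p / q \<le> s}"
  have QD: "Q s = {1..<h} \<union> D"
  proof (intro set_eqI iffI)
    fix p assume p: "p \<in> Q s"
    have "\<not> h + r < p"
    proof
      assume "h + r < p"
      then have "a + MM < Xi p / q" using F3 p unfolding Q_def by auto
      then show False using p assms unfolding Q_def by auto
    qed
    then show "p \<in> {1..<h} \<union> D" using p unfolding Q_def D_def by auto
  next
    fix p assume "p \<in> {1..<h} \<union> D"
    then show "p \<in> Q s"
    proof
      assume p: "p \<in> {1..<h}"
      then have "Xi p \<le> Xi h" using Ximono[of p h] hrn by auto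
      then have "Xi p / q \<le> a" unfolding a_def using qpos by (simp add: divide_right_mono)
      then show ?thesis unfolding Q_def using p assms hrn by auto
    next
      assume "p \<in> D" then show ?thesis unfolding Q_def D_def using h1 hrn by auto
    qed
  qed
  have "(\<Sum>p\<in>Q s. X p) = (\<Sum>p\<in>{1..<h}. X p) + (\<Sum>p\<in>D. X p)"
    unfolding QD by (rule sum.union_disjoint) (auto simp: D_def)
  moreover have "(\<Sum>p\<in>D. X p) = (\<Sum>p=h..h+r. X p * (if Xi p / q \<le> s then 1 else 0))"
    unfolding D_def by (subst sum.inter_filter) (auto intro: sum.cong)
  ultimately show ?thesis unfolding Bw_def Inf_eq[OF assms] Zw_eq CC_def by simp
qed

lemma integral_val: "integral {a..a+MM} (Bw n x xi q) = (\<Sum>p=h..h+r. X p * (a + MM - Xi p / q)) - MM^2 / 2"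
proof -
  have 1: "((\<lambda>s. \<Sum>p\<in>{h..h+r}. X p * (if Xi p / q \<le> s then 1 else 0)) has_integral
      (\<Sum>p\<in>{h..h+r}. X p * (a + MM - Xi p / q))) {a..a+MM}"
  proof (rule has_integral_sum)
    fix p assume p: "p \<in> {h..h+r}"
    have "Xi h \<le> Xi p" using Ximono[of h p] p h1 hrn by auto
    then have c1: "a \<le> Xi p / q" unfolding a_def using qpos by (simp add: divide_right_mono)
    have "(\<Sum>i\<in>{h..<p}. X i) \<le> MM" unfolding MM_def using p hrn h1
      by (intro sum_mono2) (auto intro: Xnn)
    then have c2: "Xi p / q \<le> a + MM" using F2[of p] p by auto
    show "((\<lambda>s. X p * (if Xi p / q \<le> s then 1 else 0)) has_integral (X p * (a + MM - Xi p / q))) {a..a+MM}"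
      by (rule has_integral_mult_right[OF ind_int[OF c1 c2]])
  qed simp
  have 2: "((\<lambda>s. s - a) has_integral (MM^2 / 2)) {a..a+MM}" using lin_int[of a "a + MM"] MM_nn by simp
  have "((\<lambda>s. (\<Sum>p\<in>{h..h+r}. X p * (if Xi p / q \<le> s then 1 else 0)) - (s - a)) has_integral
      ((\<Sum>p\<in>{h..h+r}. X p * (a + MM - Xi p / q)) - MM^2 / 2)) {a..a+MM}"
    by (rule has_integral_diff[OF 1 2])
  then have "(Bw n x xi q has_integral ((\<Sum>p\<in>{h..h+r}. X p * (a + MM - Xi p / q)) - MM^2 / 2)) {a..a+MM}"
    by (rule has_integral_eq[rotated]) (simp add: Bw_eq)
  then show ?thesis by (rule integral_unique)
qed

lemma LHS: "cum_rate n x xi \<pi> q h r = (\<Sum>l=h..h+r. q * (X l)^2 / 2 + X l * W l)"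
proof -
  define F where "F = (\<lambda>l (j,k). (q - real_of_ereal (T_merge n x xi \<pi> l j k)) * rate x \<pi> l j k)"
  have Tr: "{(l,j,k). l \<in> {h..h+r} \<and> 1 \<le> j \<and> j \<le> k \<and> k \<le> l \<and> (k = l \<longrightarrow> j = l)
                         \<and> T_merge n x xi \<pi> l j k \<le> ereal q} = Sigma {h..h+r} (\<lambda>l. insert (l,l) (V l))"
  proof (intro set_eqI iffI)
    fix t assume "t \<in> {(l,j,k). l \<in> {h..h+r} \<and> 1 \<le> j \<and> j \<le> k \<and> k \<le> l \<and> (k = l \<longrightarrow> j = l)
                         \<and> T_merge n x xi \<pi> l j k \<le> ereal q}"
    then obtain l j k where t: "t = (l,j,k)" and c: "l \<in> {h..h+r}" "1 \<le> j" "j \<le> k" "k \<le> l" "k = l \<longrightarrow> j = l"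
      "T_merge n x xi \<pi> l j k \<le> ereal q" by auto
    show "t \<in> Sigma {h..h+r} (\<lambda>l. insert (l,l) (V l))"
    proof (cases "k = l")
      case True then show ?thesis using t c by auto
    next
      case False
      then have "(j,k) \<in> V l" using T_char(1)[of l j k] c by auto
      then show ?thesis using t c by auto
    qed
  next
    fix t assume "t \<in> Sigma {h..h+r} (\<lambda>l. insert (l,l) (V l))"
    then obtain l j k where t: "t = (l,j,k)" and l: "l \<in> {h..h+r}" and jk: "(j,k) = (l,l) \<or> (j,k) \<in> V l" by auto
    show "t \<in> {(l,j,k). l \<in> {h..h+r} \<and> 1 \<le> j \<and> j \<le> k \<and> k \<le> l \<and> (k = l \<longrightarrow> j = l)
                         \<and> T_merge n x xi \<pi> l j k \<le> ereal q}"
      using jk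
    proof
      assume "(j,k) = (l,l)"
      then show ?thesis using t l h1 qpos unfolding T_merge_def by auto
    next
      assume V: "(j,k) \<in> V l"
      then have jk': "h \<le> j" "j \<le> k" "k < l" unfolding V_def by auto
      then have "T_merge n x xi \<pi> l j k \<le> ereal q" using T_char(1)[of l j k] l V h1 by auto
      then show ?thesis using t l jk' h1 by auto
    qed
  qed
  have "cum_rate n x xi \<pi> q h r = (\<Sum>l\<in>{h..h+r}. \<Sum>p\<in>insert (l,l) (V l). F l p)"
    unfolding cum_rate_def Tr F_def by (subst sum.Sigma) (auto simp: V_fin)
  also have "\<dots> = (\<Sum>l=h..h+r. q * (X l)^2 / 2 + X l * W l)"
  proof (rule sum.cong[OF refl])
    fix l assume l: "l \<in> {h..h+r}"
    have ni: "(l,l) \<notin> V l" unfolding V_def by auto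
    have "F l (l,l) = q * (X l)^2 / 2" unfolding F_def T_merge_def rate_def X_def by simp
    moreover have "(\<Sum>p\<in>V l. F l p) = X l * W l"
    proof -
      have "(\<Sum>p\<in>V l. F l p) = (\<Sum>(j,k)\<in>V l. X l * f j k)"
      proof (rule sum.cong[OF refl])
        fix p assume pV: "p \<in> V l"
        then obtain j k where p: "p = (j,k)" and jk: "h \<le> j" "j \<le> k" "k < l" unfolding V_def by auto
        have "T_merge n x xi \<pi> l j k = ereal (tau (Suc k))" using T_char(2)[of l j k] l jk h1 pV p by auto
        then show "F l p = (case p of (j,k) \<Rightarrow> X l * f j k)"
          unfolding F_def p rate_def f_def X_def using jk by simp
      qed
      also have "\<dots> = X l * (\<Sum>(j,k)\<in>V l. f j k)" by (simp add: sum_distrib_left case_prod_unfold)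
      also have "\<dots> = X l * W l" using S_eq[of l] l by simp
      finally show ?thesis .
    qed
    ultimately show "(\<Sum>p\<in>insert (l,l) (V l). F l p) = q * (X l)^2 / 2 + X l * W l"
      using ni V_fin by simp
  qed
  finally show ?thesis .
qed

lemma main: "cum_rate n x xi \<pi> q h r =
         q * integral {xi (\<pi> h) / q .. xi (\<pi> h) / q + (\<Sum>i=h..h+r. x (\<pi> i))} (Bw n x xi q)"
proof -
  have iv: "{xi (\<pi> h) / q .. xi (\<pi> h) / q + (\<Sum>i=h..h+r. x (\<pi> i))} = {a..a+MM}"
    unfolding a_def MM_def Xi_def X_def by simp
  define A1 where "A1 = (\<Sum>p=h..h+r. X p * W p)"
  define A2 where "A2 = (\<Sum>p=h..h+r. X p * (\<Sum>i\<in>{h..<p}. X i))"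
  define A3 where "A3 = (\<Sum>p=h..h+r. (X p)^2)"
  have sq: "MM^2 = A3 + 2 * A2" unfolding MM_def A2_def A3_def sum_sq
    by (simp add: sum.distrib sum_distrib_left algebra_simps)
  have qa: "q * a = Xi h" unfolding a_def using qpos by simp
  have "q * (\<Sum>p=h..h+r. X p * (a + MM - Xi p / q)) = (\<Sum>p=h..h+r. q * (X p * (a + MM - Xi p / q)))"
    by (simp add: sum_distrib_left)
  also have "\<dots> = (\<Sum>p=h..h+r. X p * W p + q * MM * X p - q * (X p * (\<Sum>i\<in>{h..<p}. X i)))"
    by (rule sum.cong[OF refl]) (use qpos qa in \<open>simp add: W_def field_simps\<close>)
  also have "\<dots> = A1 + (\<Sum>p=h..h+r. q * MM * X p) - (\<Sum>p=h..h+r. q * (X p * (\<Sum>i\<in>{h..<p}. X i)))"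
    unfolding A1_def by (simp add: sum.distrib sum_subtractf)
  also have "(\<Sum>p=h..h+r. q * MM * X p) = q * MM * MM" unfolding MM_def by (simp add: sum_distrib_left)
  also have "(\<Sum>p=h..h+r. q * (X p * (\<Sum>i\<in>{h..<p}. X i))) = q * A2" unfolding A2_def by (simp add: sum_distrib_left)
  finally have e1: "q * (\<Sum>p=h..h+r. X p * (a + MM - Xi p / q)) = A1 + q * MM * MM - q * A2" .
  have e2: "(\<Sum>l=h..h+r. q * (X l)^2 / 2 + X l * W l) = q / 2 * A3 + A1"
    unfolding A1_def A3_def sum.distrib sum_distrib_left by simp
  define SS where "SS = (\<Sum>p=h..h+r. X p * (a + MM - Xi p / q))"
  have "q * integral {a..a+MM} (Bw n x xi q) = q * SS - q * MM^2 / 2"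
    unfolding integral_val SS_def by (simp add: right_diff_distrib)
  also have "\<dots> = q / 2 * A3 + A1"
  proof -
    have h1': "q * SS = A1 + q * (MM * MM) - q * A2" using e1[folded SS_def] by (simp add: algebra_simps)
    have h2': "q * (MM * MM) = q * A3 + 2 * (q * A2)" using sq by (simp add: power2_eq_square algebra_simps)
    show ?thesis using h1' h2' unfolding power2_eq_square by (simp add: field_simps)
  qed
  finally show ?thesis unfolding LHS iv e2 by simp
qed

end

theorem corollary1:
  fixes n h r :: nat and x xi :: "nat \<Rightarrow> real" and \<pi> :: "nat \<Rightarrow> nat" and q :: real
  assumes "1 \<le> n"
    and "\<And>i j. 1 \<le> i \<Longrightarrow> i \<le> j \<Longrightarrow> j \<le> n \<Longrightarrow> x j \<le> x i"
    and "\<And>i. 1 \<le> i \<Longrightarrow> i \<le> n \<Longrightarrow> 0 < x i"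
    and "\<And>i. 1 \<le> i \<Longrightarrow> i \<le> n \<Longrightarrow> 0 < xi i"
    and "bij_betw \<pi> {1..n} {1..n}"
    and "\<And>i j. 1 \<le> i \<Longrightarrow> i < j \<Longrightarrow> j \<le> n \<Longrightarrow> xi (\<pi> i) < xi (\<pi> j)"
    and "0 < q"
    and "1 \<le> h" and "h + r \<le> n"
    and "is_root x xi \<pi> q h"
    and "\<And>m. h < m \<Longrightarrow> m \<le> h + r \<Longrightarrow> \<not> is_root x xi \<pi> q m"
    and "h + r = n \<or> is_root x xi \<pi> q (h + r + 1)"
  shows "cum_rate n x xi \<pi> q h r =
         q * integral {xi (\<pi> h) / q .. xi (\<pi> h) / q + (\<Sum>i=h..h+r. x (\<pi> i))} (Bw n x xi q)"
proof -
  interpret cset n x xi \<pi> q h r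
    using assms by (unfold_locales) auto
  show ?thesis by (rule main)
qed

end
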